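(* Let $p\in(\tfrac12,1)$, $\mu=(1-p,p)^{\mathbb Z}$ and $\nu=(p,1-p)^{\mathbb Z}$ on $\Omega=\{0,1\}^{\mathbb Z}$. There exists a joining $\xi$ of $\mu$ and $\nu$ that is monotone and of marker form.
   Context: For $x\in\Omega=\{0,1\}^{\mathbb Z}$, an interval $[i,i+1]\subset\mathbb Z$ is a primary marker of $x$ if $x_i=0$ and $x_{i+1}=1$. Under $\mu$ each coordinate equals $1$ with probability $p$; under $\nu$ with probability $1-p$. A joining of $\mu$ and $\nu$ is a probability measure $\xi$ on $\Omega\times\Omega$ with marginals $\mu$ and $\nu$ that is invariant under $T\times T$, where $T$ is the left shift. $\xi$ is monotone if $\xi\{(x,y): x_i\ge y_i\ \forall i\in\mathbb Z\}=1$. $\xi$ is of marker form if for $\xi$-a.e. $(x,y)$ the sequences $x$ and $y$ have exactly the same primary markers. *)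

theory Defs
  imports "HOL-Probability.Probability"
begin

text \<open>Configurations: \<Omega> = {0,1}^Z is rendered as int \<Rightarrow> bool, with True = 1, False = 0.\<close>

type_synonym config = "int \<Rightarrow> bool"

definition bernoulli_product :: "real \<Rightarrow> config measure" where
  "bernoulli_product q = PiM UNIV (\<lambda>_::int. measure_pmf (bernoulli_pmf q))"

definition left_shift :: "config \<Rightarrow> config" where
  "left_shift x = (\<lambda>i. x (i + 1))"

definition joining :: "config measure \<Rightarrow> config measure \<Rightarrow> (config \<times> config) measure \<Rightarrow> bool" where
  "joining m1 m2 \<xi> \<longleftrightarrow>
     prob_space \<xi> \<and>
     sets \<xi> = sets (m1 \<Otimes>\<^sub>M m2) \<and>
     distr \<xi> m1 fst = m1 \<and>
     distr \<xi> m2 snd = m2 \<and>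
     distr \<xi> \<xi> (\<lambda>(x, y). (left_shift x, left_shift y)) = \<xi>"

definition monotone_joining :: "(config \<times> config) measure \<Rightarrow> bool" where
  "monotone_joining \<xi> \<longleftrightarrow> (AE (x, y) in \<xi>. \<forall>i. y i \<longrightarrow> x i)"

definition primary_marker :: "config \<Rightarrow> int \<Rightarrow> bool" where
  "primary_marker x i \<longleftrightarrow> \<not> x i \<and> x (i + 1)"

definition marker_form :: "(config \<times> config) measure \<Rightarrow> bool" where
  "marker_form \<xi> \<longleftrightarrow> (AE (x, y) in \<xi>. \<forall>i. primary_marker x i \<longleftrightarrow> primary_marker y i)"

end

theory Submission
  imports Defs
begin

definition Mz :: "real \<Rightarrow> (bool \<times> bool) measure" where
  "Mz p = measure_pmf (pair_pmf (bernoulli_pmf p) (bernoulli_pmf ((1-p)/p)))"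

definition MM :: "real \<Rightarrow> (int \<Rightarrow> bool \<times> bool) measure" where
  "MM p = PiM UNIV (\<lambda>_. Mz p)"

definition XX :: "(int \<Rightarrow> bool \<times> bool) \<Rightarrow> config" where
  "XX z = (\<lambda>i. fst (z i))"

definition YY :: "(int \<Rightarrow> bool \<times> bool) \<Rightarrow> config" where
  "YY z = (\<lambda>i. fst (z i) \<and> (\<forall>j. j \<le> i \<longrightarrow> (\<forall>l\<in>{j-1..i}. fst (z l)) \<longrightarrow> snd (z j)))"

lemma prob_Mz: "prob_space (Mz p)" unfolding Mz_def by (rule prob_space_measure_pmf)

lemma prob_MM: "prob_space (MM p)" unfolding MM_def by (intro prob_space_PiM prob_Mz)

lemma sets_MM: "sets (MM p) = sets (PiM UNIV (\<lambda>_::int. count_space (UNIV::(bool\<times>bool) set)))"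
  unfolding MM_def Mz_def by (intro sets_PiM_cong) auto

lemma coord_meas[measurable]: "(\<lambda>z. z i) \<in> measurable (MM p) (count_space UNIV)"
  by (subst measurable_cong_sets[OF sets_MM refl]) measurable

lemma fst_meas[measurable]: "(\<lambda>z. fst (z i)) \<in> measurable (MM p) (count_space UNIV)"
  by (rule measurable_compose[OF coord_meas]) simp

lemma snd_meas[measurable]: "(\<lambda>z. snd (z i)) \<in> measurable (MM p) (count_space UNIV)"
  by (rule measurable_compose[OF coord_meas]) simp

lemma XX_meas[measurable]: "(\<lambda>z. XX z i) \<in> measurable (MM p) (count_space UNIV)"
  unfolding XX_def by measurable

lemma YY_meas[measurable]: "(\<lambda>z. YY z i) \<in> measurable (MM p) (count_space UNIV)"
  unfolding YY_def by measurable

lemma space_MM[simp]: "space (MM p) = UNIV"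
  unfolding MM_def Mz_def by (simp add: space_PiM)

lemma space_Mz[simp]: "space (Mz p) = UNIV"
  unfolding Mz_def by simp

lemma sets_Mz[simp]: "sets (Mz p) = UNIV"
  unfolding Mz_def by simp

lemma indep:
  assumes Q[measurable]: "Measurable.pred (MM p) Q" and inv: "\<And>z v. Q (z(k:=v)) = Q z"
  shows "emeasure (MM p) {z\<in>space (MM p). Q z \<and> z k \<in> B}
       = emeasure (MM p) {z\<in>space (MM p). Q z} * emeasure (Mz p) B"
proof -
  define N where "N = PiM (UNIV - {k}) (\<lambda>_::int. Mz p)"
  interpret N: prob_space N unfolding N_def by (intro prob_space_PiM prob_Mz)
  interpret Z: prob_space "Mz p" by (rule prob_Mz)
  interpret ZN: pair_sigma_finite "Mz p" N ..
  have ins: "insert k (UNIV - {k}) = UNIV" by auto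
  have D: "distr (Mz p \<Otimes>\<^sub>M N) (MM p) (\<lambda>(x,X). X(k:=x)) = MM p"
    using distr_pair_PiM_eq_PiM[of "UNIV-{k}" "\<lambda>_. Mz p" k] prob_Mz unfolding N_def MM_def ins by simp
  have eta: "(\<lambda>(x,X). X(k:=x)) = (\<lambda>w. (snd w)(k := fst w))" by auto
  have f: "(\<lambda>(x,X). X(k:=x)) \<in> measurable (Mz p \<Otimes>\<^sub>M N) (MM p)"
    unfolding eta MM_def N_def by (rule measurable_fun_upd[where J="UNIV-{k}"]) auto
  have g: "(\<lambda>X. X(k:=undefined)) \<in> measurable N (MM p)"
    unfolding MM_def N_def by (rule measurable_fun_upd[where J="UNIV-{k}"]) auto
  have "{X\<in>space N. Q X} = {X\<in>space N. Q (X(k:=undefined))}" by (simp add: inv)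
  also have "\<dots> \<in> sets N" using measurable_compose[OF g Q] unfolding pred_def
    by (simp add: pred_def[symmetric] pred_sets1)
  finally have S: "{X\<in>space N. Q X} \<in> sets N" .
  have pre: "(\<lambda>(x,X). X(k:=x)) -` {z\<in>space (MM p). Q z \<and> z k \<in> B} \<inter> space (Mz p \<Otimes>\<^sub>M N)
      = B \<times> {X\<in>space N. Q X}" for B
    by (auto simp: space_pair_measure inv)
  have sB: "{z\<in>space (MM p). Q z \<and> z k \<in> B} \<in> sets (MM p)" for B
  proof -
    have "{z\<in>space (MM p). Q z \<and> z k \<in> B} = {z\<in>space (MM p). Q z} \<inter> ((\<lambda>z. z k) -` B \<inter> space (MM p))" by auto
    also have "\<dots> \<in> sets (MM p)"
      using measurable_sets[OF coord_meas[of k p], of B] Q unfolding pred_def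
      by (intro sets.Int) (auto simp: pred_def[symmetric] pred_sets1 intro: sets.top[of "MM p", simplified])
    finally show ?thesis .
  qed
  have E: "emeasure (MM p) {z\<in>space (MM p). Q z \<and> z k \<in> B} = emeasure (Mz p) B * emeasure N {X\<in>space N. Q X}" for B
  proof -
    have "emeasure (MM p) {z\<in>space (MM p). Q z \<and> z k \<in> B}
        = emeasure (distr (Mz p \<Otimes>\<^sub>M N) (MM p) (\<lambda>(x,X). X(k:=x))) {z\<in>space (MM p). Q z \<and> z k \<in> B}"
      by (simp add: D)
    also have "\<dots> = emeasure (Mz p \<Otimes>\<^sub>M N) (B \<times> {X\<in>space N. Q X})"
      by (subst emeasure_distr[OF f sB], subst pre, rule refl)
    also have "\<dots> = emeasure (Mz p) B * emeasure N {X\<in>space N. Q X}"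
      by (rule N.emeasure_pair_measure_Times) (auto simp: S)
    finally show ?thesis .
  qed
  have "{z\<in>space (MM p). Q z} = {z\<in>space (MM p). Q z \<and> z k \<in> UNIV}" by auto
  then show ?thesis using E[of B] E[of UNIV] Z.emeasure_space_1 by (simp add: mult.commute)
qed

definition SS :: "int \<Rightarrow> (int \<Rightarrow> bool \<times> bool) \<Rightarrow> bool \<times> bool" where
  "SS i z = (XX z i, YY z i)"

lemma SS_eq: "(SS i z = a) = (XX z i = fst a \<and> YY z i = snd a)"
  unfolding SS_def by (cases a) auto

lemma SS_meas[measurable]: "Measurable.pred (MM p) (\<lambda>z. SS i z = a)"
  unfolding SS_eq by measurable

lemma win_meas[measurable]: "Measurable.pred (MM p) (\<lambda>z. \<forall>k\<in>{m..<n}. YY z k \<in> F k)"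
  by measurable

lemma shift_meas: "(\<lambda>z j. z (j+1)) \<in> measurable (MM p) (MM p)"
proof -
  have "(\<lambda>z j. z (j+1)) \<in> measurable (MM p) (PiM UNIV (\<lambda>_::int. Mz p))"
    by (rule measurable_PiM_single') (auto simp: Mz_def)
  then show ?thesis unfolding MM_def .
qed

lemma YX: "YY z i \<Longrightarrow> XX z i" unfolding YY_def XX_def by simp

lemma Y_rec: "YY z (i+1) = (fst (z (i+1)) \<and> (\<not> fst (z i) \<or> (YY z i \<and> snd (z (i+1)))))"
proof (cases "fst (z i)")
  case False
  have "YY z (i+1) = fst (z (i+1))"
  proof
    assume "fst (z (i+1))"
    show "YY z (i+1)" unfolding YY_def
    proof (intro conjI allI impI)
      show "fst (z (i+1))" by fact
      fix j assume j: "j \<le> i+1" "\<forall>l\<in>{j - 1..i+1}. fst (z l)"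
      have "i \<in> {j-1..i+1}" using j(1) by simp
      then have "fst (z i)" using j(2) by blast
      then show "snd (z j)" using False by simp
    qed
  qed (simp add: YY_def)
  then show ?thesis using False by simp
next
  case True
  show ?thesis
  proof
    assume A: "YY z (i+1)"
    then have f1: "fst (z (i+1))" by (simp add: YY_def)
    have A2: "\<And>j. j \<le> i+1 \<Longrightarrow> (\<forall>l\<in>{j-1..i+1}. fst (z l)) \<Longrightarrow> snd (z j)"
      using A unfolding YY_def by blast
    have "\<forall>l\<in>{i+1-1..i+1}. fst (z l)"
    proof
      fix l assume "l \<in> {i+1-1..i+1}"
      then have "l = i \<or> l = i+1" by auto
      then show "fst (z l)" using True f1 by auto
    qed
    then have s1: "snd (z (i+1))" using A2[of "i+1"] by simp
    have "YY z i" unfolding YY_def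
    proof (intro conjI allI impI)
      show "fst (z i)" by fact
      fix j assume j: "j \<le> i" "\<forall>l\<in>{j - 1..i}. fst (z l)"
      have "\<forall>l\<in>{j-1..i+1}. fst (z l)"
      proof
        fix l assume "l \<in> {j-1..i+1}"
        then have "l \<in> {j-1..i} \<or> l = i+1" by auto
        then show "fst (z l)" using j(2) f1 by auto
      qed
      then show "snd (z j)" using A2[of j] j(1) by simp
    qed
    then show "fst (z (i+1)) \<and> (\<not> fst (z i) \<or> (YY z i \<and> snd (z (i+1))))" using f1 s1 by simp
  next
    assume B: "fst (z (i+1)) \<and> (\<not> fst (z i) \<or> (YY z i \<and> snd (z (i+1))))"
    then have Y: "YY z i" "snd (z (i+1))" "fst (z (i+1))" using True by auto
    show "YY z (i+1)" unfolding YY_def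
    proof (intro conjI allI impI)
      show "fst (z (i+1))" by fact
      fix j assume j: "j \<le> i+1" "\<forall>l\<in>{j - 1..i+1}. fst (z l)"
      show "snd (z j)"
      proof (cases "j = i+1")
        case True then show ?thesis using Y by simp
      next
        case False
        then have "j \<le> i" using j by simp
        moreover have "\<forall>l\<in>{j - 1..i}. fst (z l)" using j by auto
        ultimately show ?thesis using Y(1) unfolding YY_def by blast
      qed
    qed
  qed
qed

lemma Y_local: "(\<And>j. j \<le> i \<Longrightarrow> z j = z' j) \<Longrightarrow> YY z i = YY z' i"
proof -
  assume h: "\<And>j. j \<le> i \<Longrightarrow> z j = z' j"
  have "(\<forall>l\<in>{j-1..i}. fst (z l)) = (\<forall>l\<in>{j-1..i}. fst (z' l))" for j
    by (intro ball_cong refl) (simp add: h)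
  then show ?thesis unfolding YY_def using h by (auto simp: h)
qed

lemma Y_upd: "i < k \<Longrightarrow> YY (z(k:=v)) i = YY z i"
  by (rule Y_local) auto

lemma X_upd: "i < k \<Longrightarrow> XX (z(k:=v)) i = XX z i"
  unfolding XX_def by auto

lemma S_upd: "i < k \<Longrightarrow> SS i (z(k:=v)) = SS i z"
  unfolding SS_def by (simp add: Y_upd X_upd)

lemma Y_shift: "YY (\<lambda>j. z (j+1)) i = YY z (i+1)"
proof -
  have "YY (\<lambda>j. z (j+1)) i = (fst (z (i+1)) \<and> (\<forall>j. j \<le> i \<longrightarrow> (\<forall>l\<in>{j-1..i}. fst (z (l+1))) \<longrightarrow> snd (z (j+1))))"
    unfolding YY_def by simp
  also have "(\<forall>j. j \<le> i \<longrightarrow> (\<forall>l\<in>{j-1..i}. fst (z (l+1))) \<longrightarrow> snd (z (j+1)))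
      = (\<forall>j. j \<le> i+1 \<longrightarrow> (\<forall>l\<in>{j-1..i+1}. fst (z l)) \<longrightarrow> snd (z j))"
  proof
    assume H: "\<forall>j. j \<le> i \<longrightarrow> (\<forall>l\<in>{j-1..i}. fst (z (l+1))) \<longrightarrow> snd (z (j+1))"
    show "\<forall>j. j \<le> i+1 \<longrightarrow> (\<forall>l\<in>{j-1..i+1}. fst (z l)) \<longrightarrow> snd (z j)"
    proof (intro allI impI)
      fix j assume a: "j \<le> i+1" "\<forall>l\<in>{j-1..i+1}. fst (z l)"
      have "\<forall>l\<in>{j-1-1..i}. fst (z (l+1))"
      proof
        fix l assume "l \<in> {j-1-1..i}" then have "l+1 \<in> {j-1..i+1}" by auto
        then show "fst (z (l+1))" using a by blast
      qed
      then have "snd (z (j-1+1))" using H a(1) by (metis diff_le_eq)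
      then show "snd (z j)" by simp
    qed
  next
    assume H: "\<forall>j. j \<le> i+1 \<longrightarrow> (\<forall>l\<in>{j-1..i+1}. fst (z l)) \<longrightarrow> snd (z j)"
    show "\<forall>j. j \<le> i \<longrightarrow> (\<forall>l\<in>{j-1..i}. fst (z (l+1))) \<longrightarrow> snd (z (j+1))"
    proof (intro allI impI)
      fix j assume a: "j \<le> i" "\<forall>l\<in>{j-1..i}. fst (z (l+1))"
      have "\<forall>l\<in>{j+1-1..i+1}. fst (z l)"
      proof
        fix l assume "l \<in> {j+1-1..i+1}" then have "l-1 \<in> {j-1..i}" by auto
        then show "fst (z l)" using a by fastforce
      qed
      then show "snd (z (j+1))" using H a(1) by simp
    qed
  qed
  finally show ?thesis unfolding YY_def by simp
qed

lemma marker_pt: "primary_marker (XX z) i \<longleftrightarrow> primary_marker (YY z) i"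
  using Y_rec[of z i] YX[of z i] YX[of z "i+1"] unfolding primary_marker_def XX_def by auto

lemma mono_pt: "YY z i \<longrightarrow> XX z i" using YX by blast

definition ft :: "bool \<times> bool \<Rightarrow> bool \<times> bool \<Rightarrow> bool \<times> bool" where
  "ft a v = (fst v, fst v \<and> (\<not> fst a \<or> (snd a \<and> snd v)))"

lemma S_step: "SS (i+1) z = ft (SS i z) (z (i+1))"
  unfolding SS_def ft_def by (simp add: Y_rec XX_def)

lemma UNIV_pair: "(UNIV :: (bool \<times> bool) set) = {(True,True),(True,False),(False,True),(False,False)}"
  by auto

lemma sum_UNIV_pair: "(\<Sum>a\<in>(UNIV :: (bool \<times> bool) set). f a) = f (True,True) + f (True,False) + f (False,True) + f (False,False)"
  unfolding UNIV_pair by (simp add: add.assoc)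

locale pp =
  fixes p :: real
  assumes p1: "1/2 < p" and p2: "p < 1"
begin

lemma p0: "0 < p" using p1 by simp

lemma sb: "0 \<le> (1-p)/p" "(1-p)/p \<le> 1"
  using p1 p2 p0 by (auto simp: field_simps)

definition wz :: "bool \<times> bool \<Rightarrow> real" where
  "wz v = (if v = (True,True) then 1-p else if v = (True,False) then 2*p-1
           else if v = (False,True) then (1-p)*((1-p)/p) else (1-p)*(1-(1-p)/p))"

lemma pmf_z: "pmf (pair_pmf (bernoulli_pmf p) (bernoulli_pmf ((1-p)/p))) v = wz v"
proof -
  obtain a b where v: "v = (a,b)" by fastforce
  show ?thesis using sb p0 p2 unfolding v pmf_pair wz_def
    by (cases a; cases b) (auto simp: field_simps)
qed

lemma Mz_meas: "measure (Mz p) A = (\<Sum>v\<in>UNIV. if v \<in> A then wz v else 0)"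
proof -
  have "measure (Mz p) A = sum wz A"
    unfolding Mz_def by (subst measure_measure_pmf_finite) (auto simp: pmf_z)
  also have "\<dots> = (\<Sum>v\<in>UNIV. if v \<in> A then wz v else 0)"
    by (subst sum.If_cases) auto
  finally show ?thesis .
qed

interpretation M: prob_space "MM p" by (rule prob_MM)
interpretation Z: prob_space "Mz p" by (rule prob_Mz)

lemma indep_m:
  assumes Q[measurable]: "Measurable.pred (MM p) Q" and inv: "\<And>z v. Q (z(k:=v)) = Q z"
  shows "measure (MM p) {z. Q z \<and> z k \<in> B} = measure (MM p) {z. Q z} * measure (Mz p) B"
proof -
  have "ennreal (measure (MM p) {z. Q z \<and> z k \<in> B}) = ennreal (measure (MM p) {z. Q z}) * ennreal (measure (Mz p) B)"
    using indep[OF Q inv, of B] by (simp add: M.emeasure_eq_measure Z.emeasure_eq_measure)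
  also have "\<dots> = ennreal (measure (MM p) {z. Q z} * measure (Mz p) B)"
    by (simp add: ennreal_mult)
  finally show ?thesis by (simp add: ennreal_inj)
qed

lemma coord_prob: "measure (MM p) {z. z k \<in> B} = measure (Mz p) B"
  using indep_m[of "\<lambda>_. True" k B] by (simp add: M.prob_space[simplified])

lemma total:
  assumes [measurable]: "Measurable.pred (MM p) Q"
  shows "measure (MM p) {z. Q z} = (\<Sum>a\<in>UNIV. measure (MM p) {z. Q z \<and> SS i z = a})"
proof -
  have "{z. Q z} = (\<Union>a\<in>UNIV. {z. Q z \<and> SS i z = a})" by auto
  also have "measure (MM p) \<dots> = (\<Sum>a\<in>UNIV. measure (MM p) {z. Q z \<and> SS i z = a})"
  proof (rule M.finite_measure_finite_Union)
    show "(\<lambda>a. {z. Q z \<and> SS i z = a}) ` UNIV \<subseteq> sets (MM p)"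
    proof safe
      fix a
      have "{z \<in> space (MM p). Q z \<and> SS i z = a} \<in> sets (MM p)" by measurable
      then show "{z. Q z \<and> SS i z = a} \<in> sets (MM p)" by simp
    qed
  qed (auto simp: disjoint_family_on_def)
  finally show ?thesis .
qed

definition Pt :: "bool \<times> bool \<Rightarrow> bool \<times> bool \<Rightarrow> real" where
  "Pt a t = measure (Mz p) {v. ft a v = t}"

lemma chain_step:
  assumes [measurable]: "Measurable.pred (MM p) Q" and inv: "\<And>z v. Q (z(i+1:=v)) = Q z"
  shows "measure (MM p) {z. Q z \<and> SS (i+1) z = t} = (\<Sum>a\<in>UNIV. measure (MM p) {z. Q z \<and> SS i z = a} * Pt a t)"
proof -
  have "measure (MM p) {z. Q z \<and> SS (i+1) z = t} = (\<Sum>a\<in>UNIV. measure (MM p) {z. (Q z \<and> SS (i+1) z = t) \<and> SS i z = a})"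
    by (rule total) measurable
  also have "\<dots> = (\<Sum>a\<in>UNIV. measure (MM p) {z. Q z \<and> SS i z = a} * Pt a t)"
  proof (rule sum.cong[OF refl])
    fix a
    have "{z. (Q z \<and> SS (i+1) z = t) \<and> SS i z = a} = {z. (Q z \<and> SS i z = a) \<and> z (i+1) \<in> {v. ft a v = t}}"
      by (auto simp: S_step)
    also have "measure (MM p) \<dots> = measure (MM p) {z. Q z \<and> SS i z = a} * Pt a t"
      unfolding Pt_def by (rule indep_m) (auto simp: inv S_upd)
    finally show "measure (MM p) {z. (Q z \<and> SS (i+1) z = t) \<and> SS i z = a} = measure (MM p) {z. Q z \<and> SS i z = a} * Pt a t" .
  qed
  finally show ?thesis .
qed

end

context pp begin

interpretation M: prob_space "MM p" by (rule prob_MM)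

lemma sh_inv: "distr (MM p) (MM p) (\<lambda>z j. z (j+1)) = MM p"
  using distr_PiM_reindex[of UNIV "\<lambda>_. Mz p" "\<lambda>i::int. i+1" UNIV] prob_Mz
proof -
  have e: "(\<lambda>\<omega>. \<lambda>n\<in>UNIV. \<omega> (n + 1)) = (\<lambda>z j. z (j+1::int))" by (auto simp: restrict_def)
  show ?thesis
    using distr_PiM_reindex[of UNIV "\<lambda>_. Mz p" "\<lambda>i::int. i+1" UNIV] prob_Mz
    unfolding MM_def e by (simp add: inj_on_def)
qed

lemma stat: "measure (MM p) {z. YY z (i+1)} = measure (MM p) {z. YY z i}"
proof -
  have "{z. YY z (i+1)} = (\<lambda>z j. z (j+1)) -` {z. YY z i} \<inter> space (MM p)" by (auto simp: Y_shift)
  moreover have "{z. YY z i} \<in> sets (MM p)"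
  proof -
    have "{z \<in> space (MM p). YY z i} \<in> sets (MM p)" by measurable
    then show ?thesis by simp
  qed
  ultimately have "measure (MM p) {z. YY z (i+1)} = measure (distr (MM p) (MM p) (\<lambda>z j. z (j+1))) {z. YY z i}"
    by (simp add: measure_distr[OF shift_meas])
  then show ?thesis by (simp add: sh_inv)
qed

lemma prob_X: "measure (MM p) {z. XX z i} = p"
proof -
  have e: "{z. XX z i} = {z. z i \<in> {v. fst v}}" by (auto simp: XX_def)
  have "measure (MM p) {z. XX z i} = measure (Mz p) {v. fst v}" unfolding e by (rule coord_prob)
  then show ?thesis using sb p0 by (simp add: Mz_meas sum_UNIV_pair wz_def algebra_simps)
qed

lemma prob_nX: "measure (MM p) {z. \<not> XX z i} = 1 - p"
proof -
  have e: "{z. \<not> XX z i} = {z. z i \<in> {v. \<not> fst v}}" by (auto simp: XX_def)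
  have "measure (MM p) {z. \<not> XX z i} = measure (Mz p) {v. \<not> fst v}" unfolding e by (rule coord_prob)
  then show ?thesis using sb p0 by (simp add: Mz_meas sum_UNIV_pair wz_def algebra_simps)
qed

lemma set_meas: "Measurable.pred (MM p) Q \<Longrightarrow> {z. Q z} \<in> sets (MM p)"
proof -
  assume [measurable]: "Measurable.pred (MM p) Q"
  have "{z\<in>space (MM p). Q z} \<in> sets (MM p)" by measurable
  then show ?thesis by simp
qed

definition piS :: "bool \<times> bool \<Rightarrow> real" where
  "piS t = (if t = (True,True) then 1-p else if t = (True,False) then 2*p-1 else if t = (False,True) then 0 else 1-p)"

lemma SS_TT: "{z. SS i z = (True,True)} = {z. YY z i}" by (auto simp: SS_eq dest: YX)
lemma SS_TF: "{z. SS i z = (True,False)} = {z. XX z i} - {z. YY z i}" by (auto simp: SS_eq dest: YX)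
lemma SS_FT: "{z. SS i z = (False,True)} = {}" by (auto simp: SS_eq dest: YX)
lemma SS_FF: "{z. SS i z = (False,False)} = {z. \<not> XX z i}" by (auto simp: SS_eq dest: YX)

lemma prob_TF: "measure (MM p) ({z. XX z i} - {z. YY z i}) = p - measure (MM p) {z. YY z i}"
  by (subst M.finite_measure_Diff) (auto intro!: set_meas simp: prob_X YX)

lemma prob_S_gen: "measure (MM p) {z. SS i z = t} =
   (if t = (True,True) then measure (MM p) {z. YY z i} else if t = (True,False) then p - measure (MM p) {z. YY z i}
    else if t = (False,True) then 0 else 1-p)"
proof -
  obtain a b where t: "t = (a,b)" by fastforce
  show ?thesis unfolding t
    by (cases a; cases b) (simp_all only: SS_TT SS_TF SS_FT SS_FF prob_TF prob_nX, simp_all)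
qed

lemma probY: "measure (MM p) {z. YY z i} = 1 - p"
proof -
  define a where "a = measure (MM p) {z. YY z i}"
  have "measure (MM p) {z. True \<and> SS (i+1) z = (True,True)} = (\<Sum>b\<in>UNIV. measure (MM p) {z. True \<and> SS i z = b} * Pt b (True,True))"
    by (rule chain_step) auto
  moreover have "{z. True \<and> SS (i+1) z = (True,True)} = {z. YY z (i+1)}" using YX by (auto simp: SS_eq)
  ultimately have "measure (MM p) {z. YY z (i+1)} = (\<Sum>b\<in>UNIV. measure (MM p) {z. SS i z = b} * Pt b (True,True))"
    by simp
  also have "\<dots> = a * (1-p) + (1-p) * p"
    unfolding sum_UNIV_pair prob_S_gen a_def[symmetric] Pt_def Mz_meas
    using sb p0 by (simp add: ft_def wz_def field_simps)
  finally have "a = a * (1-p) + (1-p) * p" using stat a_def by simp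
  then have "a * p = (1-p) * p" by (simp add: algebra_simps)
  then show ?thesis using p0 a_def by simp
qed

lemma prob_S: "measure (MM p) {z. SS i z = t} = piS t"
  unfolding prob_S_gen probY piS_def by simp

lemma qF: "measure (measure_pmf (bernoulli_pmf (1-p))) F = (if True \<in> F then 1-p else 0) + (if False \<in> F then p else 0)"
proof -
  have "measure (measure_pmf (bernoulli_pmf (1-p))) F = sum (pmf (bernoulli_pmf (1-p))) F"
    by (rule measure_measure_pmf_finite) simp
  also have "\<dots> = (\<Sum>v\<in>UNIV. if v \<in> F then pmf (bernoulli_pmf (1-p)) v else 0)"
    by (subst sum.If_cases) auto
  finally show ?thesis using p0 p2 by (simp add: UNIV_bool)
qed

lemma keyid: "(\<Sum>a\<in>UNIV. (if snd a \<in> F then piS a else 0) * Pt a t) = piS t * measure (measure_pmf (bernoulli_pmf (1-p))) F"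
proof -
  obtain a b where t: "t = (a,b)" by fastforce
  show ?thesis unfolding qF sum_UNIV_pair Pt_def Mz_meas t
    using sb p0 p2 by (cases a; cases b; cases "True \<in> F"; cases "False \<in> F") (simp_all add: ft_def wz_def piS_def field_simps)
qed


lemma insert_ivl: "m \<le> i \<Longrightarrow> {m..<i+1} = insert i {m..<(i::int)}" by auto

lemma winG: "measure (MM p) {z. (\<forall>k\<in>{m..<m+int n}. YY z k \<in> F k) \<and> SS (m+int n) z = t}
   = piS t * (\<Prod>k\<in>{m..<m+int n}. measure (measure_pmf (bernoulli_pmf (1-p))) (F k))"
proof (induction n arbitrary: t)
  case 0
  then show ?case by (simp add: prob_S)
next
  case (Suc n)
  define i where "i = m + int n"
  have e1: "m + int (Suc n) = i + 1" unfolding i_def by simp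
  have ins: "{m..<i+1} = insert i {m..<i}" unfolding i_def by (rule insert_ivl) simp
  let ?q = "\<lambda>k. measure (measure_pmf (bernoulli_pmf (1-p))) (F k)"
  have "measure (MM p) {z. (\<forall>k\<in>{m..<i+1}. YY z k \<in> F k) \<and> SS (i+1) z = t}
      = (\<Sum>a\<in>UNIV. measure (MM p) {z. (\<forall>k\<in>{m..<i+1}. YY z k \<in> F k) \<and> SS i z = a} * Pt a t)"
  proof (rule chain_step)
    show "Measurable.pred (MM p) (\<lambda>z. \<forall>k\<in>{m..<i+1}. YY z k \<in> F k)" by measurable
    fix z v
    show "(\<forall>k\<in>{m..<i+1}. YY (z(i+1:=v)) k \<in> F k) = (\<forall>k\<in>{m..<i+1}. YY z k \<in> F k)"
      by (intro ball_cong refl) (simp add: Y_upd)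
  qed
  also have "\<dots> = (\<Sum>a\<in>UNIV. ((if snd a \<in> F i then piS a else 0) * Pt a t) * (\<Prod>k\<in>{m..<i}. ?q k))"
  proof (rule sum.cong[OF refl])
    fix a
    have "{z. (\<forall>k\<in>{m..<i+1}. YY z k \<in> F k) \<and> SS i z = a}
        = (if snd a \<in> F i then {z. (\<forall>k\<in>{m..<i}. YY z k \<in> F k) \<and> SS i z = a} else {})"
      unfolding ins by (auto simp: SS_eq)
    then show "measure (MM p) {z. (\<forall>k\<in>{m..<i+1}. YY z k \<in> F k) \<and> SS i z = a} * Pt a t
        = ((if snd a \<in> F i then piS a else 0) * Pt a t) * (\<Prod>k\<in>{m..<i}. ?q k)"
      using Suc.IH[of a] unfolding i_def by auto
  qed
  also have "\<dots> = (\<Sum>a\<in>UNIV. (if snd a \<in> F i then piS a else 0) * Pt a t) * (\<Prod>k\<in>{m..<i}. ?q k)"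
    by (simp add: sum_distrib_right)
  also have "\<dots> = piS t * (\<Prod>k\<in>{m..<i+1}. ?q k)"
    unfolding keyid ins by (subst prod.insert) auto
  finally show ?case unfolding e1 .
qed

lemma winY: "measure (MM p) {z. \<forall>k\<in>{m..<m+int n}. YY z k \<in> F k}
   = (\<Prod>k\<in>{m..<m+int n}. measure (measure_pmf (bernoulli_pmf (1-p))) (F k))"
proof -
  have "measure (MM p) {z. \<forall>k\<in>{m..<m+int n}. YY z k \<in> F k}
     = (\<Sum>t\<in>UNIV. measure (MM p) {z. (\<forall>k\<in>{m..<m+int n}. YY z k \<in> F k) \<and> SS (m+int n) z = t})"
    by (rule total) measurable
  also have "\<dots> = (\<Sum>t\<in>UNIV. piS t) * (\<Prod>k\<in>{m..<m+int n}. measure (measure_pmf (bernoulli_pmf (1-p))) (F k))"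
    unfolding winG by (simp add: sum_distrib_right)
  also have "(\<Sum>t\<in>UNIV. piS t) = 1" unfolding sum_UNIV_pair piS_def by simp
  finally show ?thesis by simp
qed

lemma qFp: "measure (measure_pmf (bernoulli_pmf p)) F = (if True \<in> F then p else 0) + (if False \<in> F then 1-p else 0)"
proof -
  have "measure (measure_pmf (bernoulli_pmf p)) F = sum (pmf (bernoulli_pmf p)) F"
    by (rule measure_measure_pmf_finite) simp
  also have "\<dots> = (\<Sum>v\<in>UNIV. if v \<in> F then pmf (bernoulli_pmf p) v else 0)"
    by (subst sum.If_cases) auto
  finally show ?thesis using p0 p2 by (simp add: UNIV_bool)
qed

lemma Mz_fst: "measure (Mz p) {v. fst v \<in> B} = measure (measure_pmf (bernoulli_pmf p)) B"
  unfolding qFp Mz_meas sum_UNIV_pair using sb p0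
  by (cases "True \<in> B"; cases "False \<in> B") (simp_all add: wz_def field_simps)

lemma winX: "measure (MM p) {z. \<forall>k\<in>{m..<m+int n}. XX z k \<in> F k}
   = (\<Prod>k\<in>{m..<m+int n}. measure (measure_pmf (bernoulli_pmf p)) (F k))"
proof (induction n)
  case 0
  then show ?case using M.prob_space by simp
next
  case (Suc n)
  define i where "i = m + int n"
  have e1: "m + int (Suc n) = i + 1" unfolding i_def by simp
  have ins: "{m..<i+1} = insert i {m..<i}" unfolding i_def by (rule insert_ivl) simp
  have "{z. \<forall>k\<in>{m..<i+1}. XX z k \<in> F k} = {z. (\<forall>k\<in>{m..<i}. XX z k \<in> F k) \<and> z i \<in> {v. fst v \<in> F i}}"
    unfolding ins by (auto simp: XX_def)
  also have "measure (MM p) \<dots> = measure (MM p) {z. \<forall>k\<in>{m..<i}. XX z k \<in> F k} * measure (Mz p) {v. fst v \<in> F i}"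
  proof (rule indep_m)
    show "Measurable.pred (MM p) (\<lambda>z. \<forall>k\<in>{m..<i}. XX z k \<in> F k)" by measurable
    fix z v
    show "(\<forall>k\<in>{m..<i}. XX (z(i:=v)) k \<in> F k) = (\<forall>k\<in>{m..<i}. XX z k \<in> F k)"
      by (intro ball_cong refl) (simp add: X_upd)
  qed
  also have "\<dots> = (\<Prod>k\<in>{m..<i+1}. measure (measure_pmf (bernoulli_pmf p)) (F k))"
    unfolding Mz_fst ins using Suc.IH unfolding i_def by (subst prod.insert) auto
  finally show ?case unfolding e1 .
qed

end


lemma law_from_windows:
  assumes f: "f \<in> measurable N (bernoulli_product q)" and N: "prob_space N"
    and win: "\<And>m n F. measure N {z\<in>space N. \<forall>k\<in>{m..<m+int n}. f z k \<in> F k}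
               = (\<Prod>k\<in>{m..<m+int n}. measure (measure_pmf (bernoulli_pmf q)) (F k))"
  shows "distr N (bernoulli_product q) f = bernoulli_product q"
proof -
  interpret N: prob_space N by fact
  interpret B: product_prob_space "\<lambda>_::int. measure_pmf (bernoulli_pmf q)" UNIV
    by unfold_locales
  show ?thesis unfolding bernoulli_product_def
  proof (rule B.PiM_eq)
    show "sets (distr N (Pi\<^sub>M UNIV (\<lambda>_. measure_pmf (bernoulli_pmf q))) f) = sets (Pi\<^sub>M UNIV (\<lambda>_. measure_pmf (bernoulli_pmf q)))"
      by simp
    fix J :: "int set" and F :: "int \<Rightarrow> bool set" assume J: "finite J" "J \<subseteq> UNIV"
    define K where "K = Max (abs ` insert 0 J) + 1"
    have JK: "J \<subseteq> {-K..<-K + int (nat (2*K))}"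
    proof
      fix j assume "j \<in> J"
      then have "abs j \<le> Max (abs ` insert 0 J)" using J by (intro Max_ge) auto
      moreover have "0 \<le> Max (abs ` insert 0 J)" using J by (intro Max_ge_iff[THEN iffD2]) auto
      ultimately show "j \<in> {-K..<-K + int (nat (2*K))}" unfolding K_def by auto
    qed
    have K0: "0 < K" unfolding K_def using J by (smt (verit) Max_ge finite_imageI finite_insert imageI insertI1 abs_ge_zero)
    define F' where "F' k = (if k \<in> J then F k else UNIV)" for k
    have f': "f \<in> measurable N (Pi\<^sub>M UNIV (\<lambda>_. measure_pmf (bernoulli_pmf q)))"
      using f unfolding bernoulli_product_def .
    have S: "prod_emb UNIV (\<lambda>_. measure_pmf (bernoulli_pmf q)) J (Pi\<^sub>E J F) \<in> sets (Pi\<^sub>M UNIV (\<lambda>_. measure_pmf (bernoulli_pmf q)))"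
      using J by (intro sets_PiM_I) auto
    have pre: "f -` prod_emb UNIV (\<lambda>_. measure_pmf (bernoulli_pmf q)) J (Pi\<^sub>E J F) \<inter> space N
        = {z\<in>space N. \<forall>k\<in>{-K..<-K + int (nat (2*K))}. f z k \<in> F' k}"
      using JK K0 unfolding F'_def
      apply (auto simp: prod_emb_def space_PiM PiE_iff)
      using subsetD by fastforce
    have "emeasure (distr N (Pi\<^sub>M UNIV (\<lambda>_. measure_pmf (bernoulli_pmf q))) f)
             (prod_emb UNIV (\<lambda>_. measure_pmf (bernoulli_pmf q)) J (Pi\<^sub>E J F))
        = emeasure N {z\<in>space N. \<forall>k\<in>{-K..<-K + int (nat (2*K))}. f z k \<in> F' k}"
      by (subst emeasure_distr[OF f' S]) (simp add: pre)
    also have "\<dots> = ennreal (\<Prod>k\<in>{-K..<-K + int (nat (2*K))}. measure (measure_pmf (bernoulli_pmf q)) (F' k))"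
      using win[of "-K" "nat (2*K)" F'] by (simp add: N.emeasure_eq_measure)
    also have "(\<Prod>k\<in>{-K..<-K + int (nat (2*K))}. measure (measure_pmf (bernoulli_pmf q)) (F' k))
             = (\<Prod>k\<in>J. measure (measure_pmf (bernoulli_pmf q)) (F k))"
      by (rule prod.mono_neutral_cong_right[OF _ JK]) (auto simp: F'_def measure_pmf.prob_space)
    also have "ennreal \<dots> = (\<Prod>k\<in>J. emeasure (measure_pmf (bernoulli_pmf q)) (F k))"
      by (simp add: measure_pmf.emeasure_eq_measure prod_ennreal)
    finally show "emeasure (distr N (Pi\<^sub>M UNIV (\<lambda>_. measure_pmf (bernoulli_pmf q))) f)
             (prod_emb UNIV (\<lambda>_. measure_pmf (bernoulli_pmf q)) J (Pi\<^sub>E J F))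
        = (\<Prod>k\<in>J. emeasure (measure_pmf (bernoulli_pmf q)) (F k))" .
  qed
qed


lemma comp_bp[measurable]: "(\<lambda>x. x i) \<in> measurable (bernoulli_product q) (count_space UNIV)"
proof -
  have "(\<lambda>x. x i) \<in> measurable (bernoulli_product q) (measure_pmf (bernoulli_pmf q))"
    unfolding bernoulli_product_def by (rule measurable_component_singleton) simp
  then show ?thesis by simp
qed

lemma into_bp:
  assumes "\<And>i. (\<lambda>z. f z i) \<in> measurable N (count_space UNIV)"
  shows "f \<in> measurable N (bernoulli_product q)"
  unfolding bernoulli_product_def by (rule measurable_PiM_single') (auto simp: assms)

lemma ls_meas: "left_shift \<in> measurable (bernoulli_product q) (bernoulli_product q)"
  unfolding left_shift_def by (rule into_bp) simp

context pp begin

interpretation M: prob_space "MM p" by (rule prob_MM)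

lemma XX_bp: "XX \<in> measurable (MM p) (bernoulli_product q)" by (rule into_bp) simp
lemma YY_bp: "YY \<in> measurable (MM p) (bernoulli_product q)" by (rule into_bp) simp

lemma lawX: "distr (MM p) (bernoulli_product p) XX = bernoulli_product p"
  by (rule law_from_windows[OF XX_bp prob_MM]) (simp add: winX)

lemma lawY: "distr (MM p) (bernoulli_product (1-p)) YY = bernoulli_product (1-p)"
  by (rule law_from_windows[OF YY_bp prob_MM]) (simp add: winY)

definition NN where "NN = bernoulli_product p \<Otimes>\<^sub>M bernoulli_product (1-p)"
definition xi where "xi = distr (MM p) NN (\<lambda>z. (XX z, YY z))"

lemma Phi_meas: "(\<lambda>z. (XX z, YY z)) \<in> measurable (MM p) NN"
  unfolding NN_def by (intro measurable_Pair XX_bp YY_bp)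

lemma sigma_meas: "(\<lambda>(x, y). (left_shift x, left_shift y)) \<in> measurable NN NN"
proof -
  have e: "(\<lambda>(x, y). (left_shift x, left_shift y)) = (\<lambda>w. (left_shift (fst w), left_shift (snd w)))" by auto
  show ?thesis unfolding e NN_def
    by (intro measurable_Pair measurable_compose[OF measurable_fst ls_meas] measurable_compose[OF measurable_snd ls_meas])
qed

lemma main: "joining (bernoulli_product p) (bernoulli_product (1 - p)) xi \<and> monotone_joining xi \<and> marker_form xi"
proof (intro conjI)
  show "joining (bernoulli_product p) (bernoulli_product (1 - p)) xi"
    unfolding joining_def
  proof (intro conjI)
    show "prob_space xi" unfolding xi_def by (rule M.prob_space_distr[OF Phi_meas])
    show "sets xi = sets (bernoulli_product p \<Otimes>\<^sub>M bernoulli_product (1 - p))" by (simp add: xi_def NN_def)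
    have "distr xi (bernoulli_product p) fst = distr (MM p) (bernoulli_product p) (fst \<circ> (\<lambda>z. (XX z, YY z)))"
      unfolding xi_def by (rule distr_distr[OF _ Phi_meas]) (simp add: NN_def)
    also have "\<dots> = bernoulli_product p" by (simp add: o_def lawX)
    finally show "distr xi (bernoulli_product p) fst = bernoulli_product p" .
    have "distr xi (bernoulli_product (1-p)) snd = distr (MM p) (bernoulli_product (1-p)) (snd \<circ> (\<lambda>z. (XX z, YY z)))"
      unfolding xi_def by (rule distr_distr[OF _ Phi_meas]) (simp add: NN_def)
    also have "\<dots> = bernoulli_product (1-p)" by (simp add: o_def lawY)
    finally show "distr xi (bernoulli_product (1-p)) snd = bernoulli_product (1-p)" .
    have "distr xi xi (\<lambda>(x, y). (left_shift x, left_shift y)) = distr xi NN (\<lambda>(x, y). (left_shift x, left_shift y))"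
      by (rule distr_cong) (auto simp: xi_def)
    also have "\<dots> = distr (MM p) NN ((\<lambda>(x, y). (left_shift x, left_shift y)) \<circ> (\<lambda>z. (XX z, YY z)))"
      unfolding xi_def by (rule distr_distr[OF sigma_meas Phi_meas])
    also have "((\<lambda>(x, y). (left_shift x, left_shift y)) \<circ> (\<lambda>z. (XX z, YY z))) = (\<lambda>z. (XX z, YY z)) \<circ> (\<lambda>z j. z (j+1))"
      by (auto simp: fun_eq_iff left_shift_def XX_def Y_shift)
    also have "distr (MM p) NN \<dots> = distr (distr (MM p) (MM p) (\<lambda>z j. z (j+1))) NN (\<lambda>z. (XX z, YY z))"
      by (rule distr_distr[symmetric, OF Phi_meas shift_meas])
    also have "\<dots> = xi" by (simp add: sh_inv xi_def)
    finally show "distr xi xi (\<lambda>(x, y). (left_shift x, left_shift y)) = xi" .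
  qed
  show "monotone_joining xi" unfolding monotone_joining_def xi_def
  proof (subst AE_distr_iff[OF Phi_meas])
    have "{x \<in> space NN. case x of (x, y) \<Rightarrow> \<forall>i. y i \<longrightarrow> x i} \<in> sets NN" unfolding NN_def by measurable
    then show "{x \<in> space NN. case x of (x, y) \<Rightarrow> \<forall>i. y i \<longrightarrow> x i} \<in> sets NN" .
    show "AE x in MM p. case (XX x, YY x) of (x, y) \<Rightarrow> \<forall>i. y i \<longrightarrow> x i"
      by (rule AE_I2) (simp add: mono_pt)
  qed
  show "marker_form xi" unfolding marker_form_def xi_def
  proof (subst AE_distr_iff[OF Phi_meas])
    have "{x \<in> space NN. case x of (x, y) \<Rightarrow> \<forall>i. primary_marker x i = primary_marker y i} \<in> sets NN"
      unfolding NN_def primary_marker_def by measurable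
    then show "{x \<in> space NN. case x of (x, y) \<Rightarrow> \<forall>i. primary_marker x i = primary_marker y i} \<in> sets NN" .
    show "AE x in MM p. case (XX x, YY x) of (x, y) \<Rightarrow> \<forall>i. primary_marker x i = primary_marker y i"
      by (rule AE_I2) (simp add: marker_pt)
  qed
qed

end

theorem proposition4:
  fixes p :: real
  assumes "1/2 < p" and "p < 1"
  shows "\<exists>\<xi>. joining (bernoulli_product p) (bernoulli_product (1 - p)) \<xi>
              \<and> monotone_joining \<xi> \<and> marker_form \<xi>"
proof -
  interpret pp p using assms by unfold_locales
  show ?thesis using main by blast
qed

end
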